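(* Let $\varphi$ be an endomorphism of a torsion-free abelian group $A$. (R) $\varphi$ is inertial if and only if $\varphi$ is multiplication by $\frac mn$ for coprime integers $m,n$ such that, if $n\ne\pm1$, then $r_0(A)<\infty$. (L) $\varphi$ is left-inertial if and only if $\varphi$ is multiplication by $\frac mn$ for coprime integers $m,n$ with $m\neq0$ such that, if $m\ne\pm1$, then $r_0(A)<\infty$.
   Context: Abelian groups are written additively. An endomorphism $\varphi$ of $A$ is inertial if $(\varphi(X)+X)/X$ is finite for every subgroup $X\le A$, and left-inertial if $X/(X\cap\varphi(X))$ is finite for every $X\le A$. For a torsion-free group, $\varphi$ is multiplication by $\frac mn$ ($n\neq0$) means $n\varphi(x)=mx$ for all $x\in A$ (equivalently $\varphi(nx)=mx$). $r_0(A)$ denotes the torsion-free rank of $A$. *)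

theory Defs
  imports Main
begin

text \<open>An abelian group A is modelled as a type of class ab_group_add (A = UNIV).\<close>

definition zsmul :: "int \<Rightarrow> 'a::ab_group_add \<Rightarrow> 'a" where
  "zsmul n x = (if 0 \<le> n then (\<Sum>_\<in>{..<nat n}. x) else - (\<Sum>_\<in>{..<nat (- n)}. x))"

definition torsion_free :: "'a::ab_group_add itself \<Rightarrow> bool" where
  "torsion_free _ \<longleftrightarrow> (\<forall>(n::int) (x::'a). n \<noteq> 0 \<longrightarrow> zsmul n x = 0 \<longrightarrow> x = 0)"

definition endomorphism :: "('a::ab_group_add \<Rightarrow> 'a) \<Rightarrow> bool" where
  "endomorphism \<phi> \<longleftrightarrow> (\<forall>x y. \<phi> (x + y) = \<phi> x + \<phi> y)"

definition subgrp :: "'a::ab_group_add set \<Rightarrow> bool" where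
  "subgrp X \<longleftrightarrow> 0 \<in> X \<and> (\<forall>x\<in>X. \<forall>y\<in>X. x - y \<in> X)"

definition setsum :: "'a::ab_group_add set \<Rightarrow> 'a set \<Rightarrow> 'a set" where
  "setsum X Y = {x + y | x y. x \<in> X \<and> y \<in> Y}"

text \<open>For subgroups X \<subseteq> Y, the quotient Y/X is finite iff there are finitely many cosets of X in Y.\<close>
definition finite_quot :: "'a::ab_group_add set \<Rightarrow> 'a set \<Rightarrow> bool" where
  "finite_quot Y X \<longleftrightarrow> finite ((\<lambda>y. (\<lambda>x. y + x) ` X) ` Y)"

definition inertial :: "('a::ab_group_add \<Rightarrow> 'a) \<Rightarrow> bool" where
  "inertial \<phi> \<longleftrightarrow> (\<forall>X. subgrp X \<longrightarrow> finite_quot (setsum (\<phi> ` X) X) X)"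

definition left_inertial :: "('a::ab_group_add \<Rightarrow> 'a) \<Rightarrow> bool" where
  "left_inertial \<phi> \<longleftrightarrow> (\<forall>X. subgrp X \<longrightarrow> finite_quot X (X \<inter> \<phi> ` X))"

text \<open>\<phi> is multiplication by m/n: n \<noteq> 0 and n \<phi>(x) = m x for all x.\<close>
definition mult_by :: "('a::ab_group_add \<Rightarrow> 'a) \<Rightarrow> int \<Rightarrow> int \<Rightarrow> bool" where
  "mult_by \<phi> m n \<longleftrightarrow> n \<noteq> 0 \<and> (\<forall>x. zsmul n (\<phi> x) = zsmul m x)"

definition z_independent :: "'a::ab_group_add set \<Rightarrow> bool" where
  "z_independent S \<longleftrightarrow> finite S \<and>
     (\<forall>c::'a \<Rightarrow> int. (\<Sum>s\<in>S. zsmul (c s) s) = 0 \<longrightarrow> (\<forall>s\<in>S. c s = 0))"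

text \<open>r_0(A) < \<infinity>: independent subsets have bounded cardinality.\<close>
definition finite_tf_rank :: "'a::ab_group_add itself \<Rightarrow> bool" where
  "finite_tf_rank _ \<longleftrightarrow> (\<exists>N::nat. \<forall>S::'a set. z_independent S \<longrightarrow> card S \<le> N)"

end

theory Submission
  imports Defs "HOL-Computational_Algebra.Primes" "HOL.Modules" "HOL-Library.FuncSet"
begin


lemma zsmul_nonneg: "0 \<le> n \<Longrightarrow> zsmul n x = (\<Sum>_\<in>{..<nat n}. x)"
  by (simp add: zsmul_def)

lemma zsmul_0 [simp]: "zsmul 0 x = 0"
  by (simp add: zsmul_def)

lemma zsmul_succ: "zsmul (k + 1) x = zsmul k x + x"
proof (cases "0 \<le> k")
  case True
  then have "nat (k+1) = Suc (nat k)" by simp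
  then show ?thesis using True by (simp add: zsmul_def)
next
  case False
  show ?thesis
  proof (cases "k = -1")
    case True then show ?thesis by (simp add: zsmul_def)
  next
    case F2: False
    with False have k: "k + 1 < 0" by simp
    have "nat (- k) = Suc (nat (- (k+1)))" using k by simp
    then show ?thesis using False k by (simp add: zsmul_def)
  qed
qed

lemma zsmul_pred: "zsmul (k - 1) x = zsmul k x - x"
  using zsmul_succ[of "k - 1" x] by simp

lemma zsmul_add_left: "zsmul (a + b) x = zsmul a x + zsmul b x"
proof (induct b rule: int_induct[where k=0])
  case base then show ?case by simp
next
  case (step1 i)
  have "zsmul (a + (i + 1)) x = zsmul ((a + i) + 1) x" by (simp add: add.assoc)
  also have "\<dots> = zsmul a x + zsmul i x + x" by (simp only: zsmul_succ step1(2))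
  finally show ?case by (simp only: zsmul_succ add.assoc)
next
  case (step2 i)
  have "zsmul (a + (i - 1)) x = zsmul ((a + i) - 1) x" by (simp add: algebra_simps)
  also have "\<dots> = zsmul a x + zsmul i x - x" by (simp only: zsmul_pred step2(2))
  finally show ?case by (simp only: zsmul_pred add_diff_eq)
qed

lemma zsmul_add_right: "zsmul k (x + y) = zsmul k x + zsmul k y"
proof (induct k rule: int_induct[where k=0])
  case base then show ?case by simp
next
  case (step1 i) then show ?case
    by (simp only: zsmul_succ step1(2)) (simp add: algebra_simps)
next
  case (step2 i) then show ?case
    by (simp only: zsmul_pred step2(2)) (simp add: algebra_simps)
qed

lemma zsmul_one [simp]: "zsmul 1 x = x"
  using zsmul_succ[of 0 x] by simp

lemma zsmul_mult: "zsmul a (zsmul b x) = zsmul (a * b) x"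
proof (induct a rule: int_induct[where k=0])
  case base then show ?case by simp
next
  case (step1 i)
  have "(i + 1) * b = i * b + b" by (simp add: algebra_simps)
  then show ?case
    by (simp only: zsmul_succ step1(2) zsmul_add_left zsmul_one)
next
  case (step2 i)
  have "(i - 1) * b = i * b + (- b)" by (simp add: algebra_simps)
  moreover have "zsmul (-b) x = - zsmul b x"
    using zsmul_add_left[of b "-b" x] by (simp add: eq_neg_iff_add_eq_0 add.commute)
  ultimately show ?case
    by (simp only: zsmul_pred step2(2) zsmul_add_left) simp
qed

lemma zm: "module zsmul"
  by unfold_locales (auto simp: zsmul_add_left zsmul_add_right zsmul_mult)

interpretation zm: module "zsmul :: int \<Rightarrow> 'a::ab_group_add \<Rightarrow> 'a"
  by (rule zm)

lemma "zsmul (-a) (x::'a::ab_group_add) = - zsmul a x"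
  by (simp add: zm.scale_minus_left)



lemma tf_cancel:
  assumes "torsion_free TYPE('a::ab_group_add)" "n \<noteq> 0" "zsmul n x = zsmul n (y::'a)"
  shows "x = y"
proof -
  have "zsmul n (x - y) = 0" using assms(3) by (simp add: zm.scale_right_diff_distrib)
  then have "x - y = 0" using assms(1,2) unfolding torsion_free_def by blast
  then show ?thesis by simp
qed

lemma tf_scal_cancel:
  assumes "torsion_free TYPE('a::ab_group_add)" "(x::'a) \<noteq> 0" "zsmul c x = zsmul d x"
  shows "c = d"
proof -
  have "zsmul (c - d) x = 0" using assms(3) by (simp add: zm.scale_left_diff_distrib)
  then have "c - d = 0" using assms(1,2) unfolding torsion_free_def by blast
  then show ?thesis by simp
qed

lemma endo_add: "endomorphism \<phi> \<Longrightarrow> \<phi> (x + y) = \<phi> x + \<phi> y"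
  by (simp add: endomorphism_def)

lemma endo_additive: "endomorphism \<phi> \<Longrightarrow> additive \<phi>"
  by unfold_locales (simp add: endomorphism_def)

lemma endo_0: "endomorphism \<phi> \<Longrightarrow> \<phi> 0 = 0"
  using additive.zero[OF endo_additive] .
lemma endo_diff: "endomorphism \<phi> \<Longrightarrow> \<phi> (x - y) = \<phi> x - \<phi> y"
  using additive.diff[OF endo_additive] .
lemma endo_neg: "endomorphism \<phi> \<Longrightarrow> \<phi> (- x) = - \<phi> x"
  using additive.minus[OF endo_additive] .

lemma endo_zsmul:
  assumes "endomorphism \<phi>"
  shows "\<phi> (zsmul k x) = zsmul k (\<phi> x)"
proof (induct k rule: int_induct[where k=0])
  case base then show ?case using endo_0[OF assms] by simp
next
  case (step1 i) then show ?case
    by (simp only: zsmul_succ endo_add[OF assms])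
next
  case (step2 i) then show ?case
    by (simp only: zsmul_pred endo_diff[OF assms])
qed

lemma subgrp_subspace: "subgrp X \<longleftrightarrow> zm.subspace X"
proof
  assume X: "subgrp X"
  have neg: "- x \<in> X" if "x \<in> X" for x
    using X that unfolding subgrp_def by (metis diff_0)
  have add: "x + y \<in> X" if "x \<in> X" "y \<in> X" for x y
    using X that neg[of y] unfolding subgrp_def by (metis diff_minus_eq_add)
  have sc: "zsmul k x \<in> X" if "x \<in> X" for k x
  proof (induct k rule: int_induct[where k=0])
    case base then show ?case using X by (simp add: subgrp_def)
  next
    case (step1 i) then show ?case using add that by (simp only: zsmul_succ)
  next
    case (step2 i) then show ?case using X that unfolding subgrp_def by (simp only: zsmul_pred)
  qed
  show "zm.subspace X" unfolding zm.subspace_def using X add sc by (auto simp: subgrp_def)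
next
  assume "zm.subspace X"
  then show "subgrp X" unfolding subgrp_def by (auto intro: zm.subspace_0 zm.subspace_diff)
qed

lemma coset_eq_imp:
  assumes "0 \<in> H" "(\<lambda>x. a + x) ` H = (\<lambda>x. b + x) ` H"
  shows "a - (b::'a::ab_group_add) \<in> H"
proof -
  have "a \<in> (\<lambda>x. a + x) ` H" using assms(1) by (metis add_0_right image_eqI)
  then have "a \<in> (\<lambda>x. b + x) ` H" using assms(2) by simp
  then obtain h where "h \<in> H" "a = b + h" by auto
  then show ?thesis by simp
qed

lemma coset_shift:
  assumes "zm.subspace H" "h \<in> H"
  shows "(\<lambda>x. (r + h) + x) ` H = (\<lambda>x. r + x) ` H"
proof
  show "(\<lambda>x. (r + h) + x) ` H \<subseteq> (\<lambda>x. r + x) ` H"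
  proof
    fix y assume "y \<in> (\<lambda>x. (r + h) + x) ` H"
    then obtain x where "x \<in> H" "y = r + (h + x)" by (auto simp: add.assoc)
    then show "y \<in> (\<lambda>x. r + x) ` H" using assms zm.subspace_add by blast
  qed
next
  show "(\<lambda>x. r + x) ` H \<subseteq> (\<lambda>x. (r + h) + x) ` H"
  proof
    fix y assume "y \<in> (\<lambda>x. r + x) ` H"
    then obtain x where x: "x \<in> H" "y = r + x" by auto
    then have "y = (r + h) + (x - h)" by simp
    moreover have "x - h \<in> H" using assms x zm.subspace_diff by blast
    ultimately show "y \<in> (\<lambda>x. (r + h) + x) ` H" by blast
  qed
qed

lemma coset_self:
  assumes "zm.subspace H" "h \<in> H"
  shows "(\<lambda>x. h + x) ` H = H"
  using coset_shift[OF assms, of 0] by (simp add: image_def)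

lemma nat_not_inj_finite:
  assumes "finite C" "\<And>j::nat. f j \<in> C"
  shows "\<exists>i j. i < j \<and> f i = f j"
proof -
  have "\<not> inj f"
  proof
    assume "inj f"
    then have "finite (UNIV::nat set)"
      using finite_imageD[of f UNIV] assms finite_subset[of "range f" C] by auto
    then show False by simp
  qed
  then obtain i j where "i \<noteq> j" "f i = f j" unfolding inj_def by auto
  then show ?thesis by (metis nat_neq_iff)
qed

lemma inertial_pointwise:
  assumes endo: "endomorphism \<phi>" and I: "inertial \<phi>"
  shows "\<exists>k l. k \<noteq> 0 \<and> zsmul k (\<phi> x) = zsmul l x"
proof -
  define X where "X = zm.span {x}"
  have sX: "zm.subspace X" unfolding X_def by simp
  then have "subgrp X" by (simp add: subgrp_subspace)
  then have fin: "finite_quot (setsum (\<phi> ` X) X) X" using I unfolding inertial_def by auto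
  define f where "f j = (\<lambda>y. \<phi> (zsmul (int j) x) + y) ` X" for j
  have "f j \<in> (\<lambda>y. (\<lambda>x. y + x) ` X) ` (setsum (\<phi> ` X) X)" for j
  proof -
    have "zsmul (int j) x \<in> X" unfolding X_def by (simp add: zm.span_base zm.span_scale)
    then have "\<phi> (zsmul (int j) x) + 0 \<in> setsum (\<phi> ` X) X"
      unfolding setsum_def using zm.subspace_0[OF sX] by blast
    then show ?thesis unfolding f_def by force
  qed
  then obtain i j where ij: "i < j" "f i = f j"
    using nat_not_inj_finite[of _ f] fin unfolding finite_quot_def by blast
  then have "\<phi> (zsmul (int i) x) - \<phi> (zsmul (int j) x) \<in> X"
    unfolding f_def using coset_eq_imp[of X] zm.subspace_0[OF sX] by blast
  then have "zsmul (int i - int j) (\<phi> x) \<in> X"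
    by (simp add: endo_zsmul[OF endo] zm.scale_left_diff_distrib)
  then obtain l where "zsmul (int i - int j) (\<phi> x) = zsmul l x"
    unfolding X_def zm.span_singleton by auto
  moreover have "int i - int j \<noteq> 0" using ij by simp
  ultimately show ?thesis by blast
qed

lemma left_inertial_pointwise:
  assumes endo: "endomorphism \<phi>" and I: "left_inertial \<phi>"
  shows "\<exists>k l. k \<noteq> 0 \<and> zsmul k x = zsmul l (\<phi> x)"
proof -
  define X where "X = zm.span {x}"
  have sX: "zm.subspace X" unfolding X_def by simp
  then have "subgrp X" by (simp add: subgrp_subspace)
  then have fin: "finite_quot X (X \<inter> \<phi> ` X)" using I unfolding left_inertial_def by auto
  define H where "H = X \<inter> \<phi> ` X"
  have H0: "0 \<in> H" unfolding H_def using zm.subspace_0[OF sX] endo_0[OF endo] by force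
  define f where "f j = (\<lambda>y. zsmul (int j) x + y) ` H" for j
  have "f j \<in> (\<lambda>y. (\<lambda>x. y + x) ` H) ` X" for j
  proof -
    have "zsmul (int j) x \<in> X" unfolding X_def by (simp add: zm.span_base zm.span_scale)
    then show ?thesis unfolding f_def by force
  qed
  then obtain i j where ij: "i < j" "f i = f j"
    using nat_not_inj_finite[of _ f] fin unfolding finite_quot_def H_def by blast
  then have "zsmul (int i) x - zsmul (int j) x \<in> H"
    unfolding f_def using coset_eq_imp[of H] H0 by blast
  then have "zsmul (int i - int j) x \<in> \<phi> ` X"
    by (simp add: H_def zm.scale_left_diff_distrib)
  then obtain w where "w \<in> X" "zsmul (int i - int j) x = \<phi> w" by auto
  then obtain l where "zsmul (int i - int j) x = zsmul l (\<phi> x)"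
    unfolding X_def zm.span_singleton by (auto simp: endo_zsmul[OF endo])
  moreover have "int i - int j \<noteq> 0" using ij by simp
  ultimately show ?thesis by blast
qed



lemma ratio_consistent:
  fixes \<phi> :: "'a::ab_group_add \<Rightarrow> 'a"
  assumes tf: "torsion_free TYPE('a)" and endo: "endomorphism \<phi>"
    and H: "\<And>z. \<exists>k l. k \<noteq> 0 \<and> zsmul k (\<phi> z) = zsmul l z"
    and x: "x \<noteq> 0" "k \<noteq> 0" "zsmul k (\<phi> x) = zsmul l x"
    and y: "y \<noteq> 0" "k' \<noteq> 0" "zsmul k' (\<phi> y) = zsmul l' y"
  shows "l * k' = l' * k"
proof (cases "\<exists>a b. (a \<noteq> 0 \<or> b \<noteq> 0) \<and> zsmul a x + zsmul b y = 0")
  case True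
  then obtain a b where ab: "a \<noteq> 0 \<or> b \<noteq> 0" "zsmul a x + zsmul b y = 0" by blast
  have a: "a \<noteq> 0"
  proof
    assume "a = 0"
    then have "b \<noteq> 0" "zsmul b y = 0" using ab by auto
    then show False using tf y(1) unfolding torsion_free_def by blast
  qed
  have b: "b \<noteq> 0"
  proof
    assume "b = 0"
    then have "zsmul a x = 0" using ab by auto
    then show False using tf x(1) a unfolding torsion_free_def by blast
  qed
  have ax: "zsmul a x = zsmul (-b) y" using ab(2) by (simp add: eq_neg_iff_add_eq_0)
  have "zsmul a (\<phi> x) = zsmul (-b) (\<phi> y)"
    using arg_cong[OF ax, of \<phi>] by (simp only: endo_zsmul[OF endo])
  have e1: "zsmul (k*k'*a) (\<phi> x) = zsmul (k'*l*(-b)) y"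
  proof -
    have "zsmul (k*k'*a) (\<phi> x) = zsmul (k'*a) (zsmul k (\<phi> x))" by (simp add: ac_simps)
    also have "\<dots> = zsmul (k'*l) (zsmul a x)" using x(3) by (simp add: ac_simps)
    also have "\<dots> = zsmul (k'*l*(-b)) y" using ax by (simp add: ac_simps)
    finally show ?thesis .
  qed
  have e2: "zsmul (k*k'*a) (\<phi> x) = zsmul (k*(-b)*l') y"
  proof -
    have "zsmul (k*k'*a) (\<phi> x) = zsmul (k*k') (zsmul a (\<phi> x))" by (simp add: ac_simps)
    also have "\<dots> = zsmul (k*k') (zsmul (-b) (\<phi> y))" using \<open>zsmul a (\<phi> x) = zsmul (-b) (\<phi> y)\<close> by simp
    also have "\<dots> = zsmul (k*(-b)) (zsmul k' (\<phi> y))" by (simp only: zm.scale_scale ac_simps)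
    also have "\<dots> = zsmul (k*(-b)*l') y" using y(3) by simp
    finally show ?thesis .
  qed
  have "k'*l*(-b) = k*(-b)*l'" using tf_scal_cancel[OF tf y(1)] e1 e2 by metis
  then have "(-b) * (l*k') = (-b) * (l'*k)" by (simp add: ac_simps)
  then show ?thesis using b by simp
next
  case False
  then have ind: "\<And>a b. zsmul a x + zsmul b y = 0 \<Longrightarrow> a = 0 \<and> b = 0" by blast
  have z: "x + y \<noteq> 0" using ind[of 1 1] by auto
  obtain k'' l'' where z'': "k'' \<noteq> 0" "zsmul k'' (\<phi> (x+y)) = zsmul l'' (x+y)" using H by blast
  have "zsmul (k*k'*k'') (\<phi> (x+y)) = zsmul (k'*k''*l) x + zsmul (k*k''*l') y"
  proof -
    have "zsmul (k*k'*k'') (\<phi> (x+y)) = zsmul (k'*k'') (zsmul k (\<phi> x)) + zsmul (k*k'') (zsmul k' (\<phi> y))"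
      by (simp add: endo_add[OF endo] zm.scale_right_distrib ac_simps)
    then show ?thesis using x(3) y(3) by (simp add: ac_simps)
  qed
  moreover have "zsmul (k*k'*k'') (\<phi> (x+y)) = zsmul (k*k'*l'') x + zsmul (k*k'*l'') y"
  proof -
    have "zsmul (k*k'*k'') (\<phi> (x+y)) = zsmul (k*k') (zsmul k'' (\<phi> (x+y)))" by (simp add: ac_simps)
    then show ?thesis using z''(2) by (simp add: zm.scale_right_distrib ac_simps)
  qed
  ultimately have "zsmul (k'*k''*l - k*k'*l'') x + zsmul (k*k''*l' - k*k'*l'') y = 0"
    by (simp add: zm.scale_left_diff_distrib algebra_simps)
  then have e0: "k'*k''*l - k*k'*l'' = 0 \<and> k*k''*l' - k*k'*l'' = 0" by (rule ind)
  then have e: "k'*k''*l = k*k'*l''" "k*k''*l' = k*k'*l''" by simp_all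
  then have "k' * (k''*l) = k' * (k*l'')" "k * (k''*l') = k * (k'*l'')" by (simp_all add: ac_simps)
  then have e2: "k''*l = k*l''" "k''*l' = k'*l''" using x(2) y(2) by simp_all
  then have "k'' * (l*k') = k'' * (l'*k)"
    by (metis mult.assoc mult.commute)
  then show ?thesis using z''(1) by simp
qed

lemma uniform_ratio:
  fixes \<phi> :: "'a::ab_group_add \<Rightarrow> 'a"
  assumes tf: "torsion_free TYPE('a)" and endo: "endomorphism \<phi>"
    and H: "\<And>z. \<exists>k l. k \<noteq> 0 \<and> zsmul k (\<phi> z) = zsmul l z"
  shows "\<exists>m n. coprime m n \<and> mult_by \<phi> m n"
proof (cases "\<exists>x0::'a. x0 \<noteq> 0")
  case False
  then have "mult_by \<phi> 0 1" unfolding mult_by_def by auto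
  then show ?thesis by (intro exI[of _ 0] exI[of _ 1]) auto
next
  case True
  then obtain x0 :: 'a where x0: "x0 \<noteq> 0" by blast
  obtain k0 l0 where k0: "k0 \<noteq> 0" "zsmul k0 (\<phi> x0) = zsmul l0 x0" using H by blast
  define g where "g = gcd l0 k0"
  define m where "m = l0 div g"
  define n where "n = k0 div g"
  have g0: "g \<noteq> 0" using k0 by (simp add: g_def)
  have cop: "coprime m n" unfolding m_def n_def g_def using k0(1) by (intro div_gcd_coprime) auto
  have l0g: "l0 = m * g" unfolding m_def g_def by simp
  have k0g: "k0 = n * g" unfolding n_def g_def by simp
  have n0: "n \<noteq> 0" using k0g k0(1) by auto
  have "zsmul n (\<phi> x) = zsmul m x" for x
  proof (cases "x = 0")
    case True then show ?thesis using endo_0[OF endo] by simp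
  next
    case False
    obtain k l where kl: "k \<noteq> 0" "zsmul k (\<phi> x) = zsmul l x" using H by blast
    have "l * k0 = l0 * k" using ratio_consistent[OF tf endo H False kl x0 k0] .
    then have "g * (l * n) = g * (m * k)" by (simp add: l0g k0g ac_simps)
    then have lk: "l * n = m * k" using g0 by simp
    have "zsmul k (zsmul n (\<phi> x)) = zsmul k (zsmul m x)"
    proof -
      have "zsmul k (zsmul n (\<phi> x)) = zsmul n (zsmul k (\<phi> x))" by (simp add: ac_simps)
      also have "\<dots> = zsmul (l * n) x" using kl(2) by (simp add: ac_simps)
      also have "\<dots> = zsmul k (zsmul m x)" using lk by (simp add: ac_simps)
      finally show ?thesis .
    qed
    then show ?thesis using tf_cancel[OF tf kl(1)] by blast
  qed
  then have "mult_by \<phi> m n" using n0 unfolding mult_by_def by blast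
  then show ?thesis using cop by blast
qed



lemma zsmul_if0: "zsmul (if P then a else 0) x = (if P then zsmul a x else 0)"
  by simp

lemma z_independent_iff: "z_independent S \<longleftrightarrow> finite S \<and> zm.independent S"
  unfolding z_independent_def
  using zm.dependent_finite[of S] by auto

lemma elim_card:
  fixes M :: "'a::ab_group_add set"
  assumes tf: "torsion_free TYPE('a)" and fM: "finite M"
  shows "\<And>S. finite S \<Longrightarrow> zm.independent S \<Longrightarrow> (\<forall>s\<in>S. \<exists>d. d \<noteq> 0 \<and> zsmul d s \<in> zm.span M)
     \<Longrightarrow> card S \<le> card M"
  using fM
proof (induct M rule: finite_induct)
  case empty
  have "S = {}"
  proof (rule ccontr)
    assume "S \<noteq> {}"
    then obtain s where s: "s \<in> S" by auto
    then obtain d where "d \<noteq> 0" "zsmul d s = 0" using empty(3) by auto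
    then have "s = 0" using tf unfolding torsion_free_def by blast
    then show False using s empty(2) zm.dependent_zero by blast
  qed
  then show ?case by simp
next
  case (insert e M S)
  note IH = insert(3)
  have "\<forall>s\<in>S. \<exists>d c. d \<noteq> 0 \<and> zsmul d s - zsmul c e \<in> zm.span M"
    using insert(6) zm.span_breakdown_eq by blast
  then obtain d c where dc: "\<And>s. s \<in> S \<Longrightarrow> d s \<noteq> 0 \<and> zsmul (d s) s - zsmul (c s) e \<in> zm.span M"
    by metis
  show ?case
  proof (cases "\<forall>s\<in>S. c s = 0")
    case True
    then have "\<forall>s\<in>S. \<exists>d. d \<noteq> 0 \<and> zsmul d s \<in> zm.span M" using dc by fastforce
    then have "card S \<le> card M" using IH insert(4,5) by blast
    then show ?thesis using insert(1,2) by simp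
  next
    case False
    then obtain s0 where s0: "s0 \<in> S" "c s0 \<noteq> 0" by auto
    define \<gamma> where "\<gamma> = c s0"
    define f where "f s = zsmul (\<gamma> * d s) s - zsmul (c s * d s0) s0" for s
    define T where "T = S - {s0}"
    have fin: "finite T" using insert(4) by (simp add: T_def)
    have fspan: "f s \<in> zm.span M" if "s \<in> S" for s
    proof -
      have "f s = zsmul \<gamma> (zsmul (d s) s - zsmul (c s) e) - zsmul (c s) (zsmul (d s0) s0 - zsmul (c s0) e)"
        unfolding f_def \<gamma>_def by (simp add: zm.scale_right_diff_distrib ac_simps)
      then show ?thesis using dc[OF that] dc[OF s0(1)]
        by (simp add: zm.span_diff zm.span_scale)
    qed
    have key: "\<forall>s\<in>T. a s = 0" if "(\<Sum>s\<in>T. zsmul (a s) (f s)) = 0" for a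
    proof -
      define b where "b s = (if s = s0 then - (\<Sum>t\<in>T. a t * c t * d s0) else a s * \<gamma> * d s)" for s
      have "(\<Sum>s\<in>T. zsmul (a s) (f s)) = (\<Sum>s\<in>T. zsmul (a s * \<gamma> * d s) s) - zsmul (\<Sum>t\<in>T. a t * c t * d s0) s0"
        unfolding f_def by (simp add: zm.scale_right_diff_distrib sum_subtractf zm.scale_sum_left ac_simps)
      also have "\<dots> = (\<Sum>s\<in>S. zsmul (b s) s)"
      proof -
        have "(\<Sum>s\<in>S. zsmul (b s) s) = zsmul (b s0) s0 + (\<Sum>s\<in>T. zsmul (b s) s)"
          unfolding T_def using insert(4) s0(1) by (simp add: sum.remove)
        also have "(\<Sum>s\<in>T. zsmul (b s) s) = (\<Sum>s\<in>T. zsmul (a s * \<gamma> * d s) s)"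
          unfolding T_def b_def by (intro sum.cong) auto
        finally show ?thesis by (simp add: b_def)
      qed
      finally have "(\<Sum>s\<in>S. zsmul (b s) s) = 0" using that by simp
      then have "\<forall>s\<in>S. b s = 0" using zm.independentD[OF insert(5) insert(4)] by blast
      show ?thesis
      proof
        fix s assume s: "s \<in> T"
        then have "s \<in> S" "s \<noteq> s0" by (auto simp: T_def)
        then have "a s * \<gamma> * d s = 0" using \<open>\<forall>s\<in>S. b s = 0\<close> by (auto simp: b_def)
        then show "a s = 0" using dc[OF \<open>s\<in>S\<close>] s0(2) by (simp add: \<gamma>_def)
      qed
    qed
    have inj: "inj_on f T"
    proof (rule inj_onI, rule ccontr)
      fix s t assume st: "s \<in> T" "t \<in> T" "f s = f t" "s \<noteq> t"
      define a where "a u = (if u = s then 1 else if u = t then -1 else (0::int))" for u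
      have "(\<Sum>u\<in>T. zsmul (a u) (f u)) = (\<Sum>u\<in>{s,t}. zsmul (a u) (f u))"
        using st fin by (intro sum.mono_neutral_right) (auto simp: a_def)
      also have "\<dots> = 0" using st by (simp add: a_def)
      finally have "\<forall>u\<in>T. a u = 0" by (rule key)
      then have "a s = 0" using st(1) by blast
      then show False by (simp add: a_def)
    qed
    have indT: "zm.independent (f ` T)"
    proof
      assume "zm.dependent (f ` T)"
      then obtain u where u: "\<exists>v\<in>f ` T. u v \<noteq> 0" "(\<Sum>v\<in>f ` T. zsmul (u v) v) = 0"
        using zm.dependent_finite[of "f ` T"] fin by auto
      have "(\<Sum>s\<in>T. zsmul (u (f s)) (f s)) = 0" using u(2) sum.reindex[OF inj, of "\<lambda>v. zsmul (u v) v"] by (simp add: comp_def)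
      then have "\<forall>s\<in>T. u (f s) = 0" by (rule key)
      then show False using u(1) by auto
    qed
    have "card (f ` T) \<le> card M"
      using IH[of "f ` T"] fin indT fspan unfolding T_def
      by (metis (no_types, lifting) Diff_subset finite_imageI imageE subset_iff zsmul_one one_neq_zero)
    moreover have "card (f ` T) = card S - 1" using card_image[OF inj] s0(1) by (simp add: T_def)
    moreover have "card S \<ge> 1" using s0(1) insert(4) by (simp add: Suc_le_eq card_gt_0_iff) blast
    ultimately show ?thesis using insert(1,2) by simp
  qed
qed

lemma maximal_indep_exists:
  "\<exists>M::'a::ab_group_add set. zm.independent M \<and> (\<forall>N. zm.independent N \<longrightarrow> M \<subseteq> N \<longrightarrow> N = M)"
proof -
  let ?A = "{M::'a set. zm.independent M}"
  have "\<forall>C\<in>chains ?A. \<exists>U\<in>?A. \<forall>X\<in>C. X \<subseteq> U"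
  proof
    fix C assume C: "C \<in> chains ?A"
    have "zm.independent (\<Union>C)"
      by (rule zm.independent_Union_directed) (use C in \<open>auto simp: chains_def chain_subset_def\<close>)
    then show "\<exists>U\<in>?A. \<forall>X\<in>C. X \<subseteq> U" by blast
  qed
  from Zorn_Lemma2[OF this] show ?thesis by blast
qed

lemma maximal_span:
  fixes M :: "'a::ab_group_add set"
  assumes M: "zm.independent M" "\<forall>N. zm.independent N \<longrightarrow> M \<subseteq> N \<longrightarrow> N = M"
  shows "\<exists>d. d \<noteq> 0 \<and> zsmul d a \<in> zm.span M"
proof (cases "a \<in> M")
  case True then show ?thesis by (intro exI[of _ 1]) (simp add: zm.span_base)
next
  case False
  then have "zm.dependent (insert a M)" using M(2) by blast
  then obtain t u v where tu: "finite t" "t \<subseteq> insert a M" "(\<Sum>v\<in>t. zsmul (u v) v) = 0" "v \<in> t" "u v \<noteq> 0"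
    unfolding zm.dependent_explicit by blast
  have at: "a \<in> t \<and> u a \<noteq> 0"
  proof (rule ccontr)
    assume "\<not> (a \<in> t \<and> u a \<noteq> 0)"
    define t' where "t' = t - {a}"
    have "(\<Sum>v\<in>t'. zsmul (u v) v) = (\<Sum>v\<in>t. zsmul (u v) v)"
      unfolding t'_def using tu(1) \<open>\<not> (a \<in> t \<and> u a \<noteq> 0)\<close>
      by (intro sum.mono_neutral_left) auto
    then have "zm.dependent M" unfolding zm.dependent_explicit
      using tu \<open>\<not> (a \<in> t \<and> u a \<noteq> 0)\<close>
      by (intro exI[of _ t'] exI[of _ u]) (auto simp: t'_def)
    then show False using M(1) by blast
  qed
  have "(\<Sum>v\<in>t. zsmul (u v) v) = zsmul (u a) a + (\<Sum>v\<in>t - {a}. zsmul (u v) v)"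
    by (meson at sum.remove tu(1))
  then have "zsmul (u a) a = - (\<Sum>v\<in>t - {a}. zsmul (u v) v)" using tu(3) by (simp add: eq_neg_iff_add_eq_0)
  moreover have "(\<Sum>v\<in>t - {a}. zsmul (u v) v) \<in> zm.span M"
    using tu(2) by (intro zm.span_sum zm.span_scale zm.span_base) auto
  ultimately show ?thesis using at by (metis zm.span_neg)
qed

lemma infinite_indep_exists:
  assumes tf: "torsion_free TYPE('a::ab_group_add)" and nr: "\<not> finite_tf_rank TYPE('a)"
  shows "\<exists>M::'a set. infinite M \<and> zm.independent M"
proof -
  obtain M :: "'a set" where M: "zm.independent M" "\<forall>N. zm.independent N \<longrightarrow> M \<subseteq> N \<longrightarrow> N = M"
    using maximal_indep_exists by blast
  have "infinite M"
  proof
    assume fM: "finite M"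
    have "\<forall>S::'a set. z_independent S \<longrightarrow> card S \<le> card M"
      using elim_card[OF tf fM] maximal_span[OF M] unfolding z_independent_iff by blast
    then show False using nr unfolding finite_tf_rank_def by blast
  qed
  then show ?thesis using M by blast
qed

lemma indep_no_divide:
  fixes M :: "'a::ab_group_add set"
  assumes M: "zm.independent M" and e: "e \<in> M" "e' \<in> M" "e \<noteq> e'"
    and w: "w \<in> zm.span M" and eq: "zsmul u (e - e') = zsmul v w"
  shows "v dvd u"
proof -
  obtain F r where F: "finite F" "F \<subseteq> M" "w = (\<Sum>a\<in>F. zsmul (r a) a)"
    using w unfolding zm.span_explicit by blast
  define G where "G = F \<union> {e, e'}"
  have fG: "finite G" "G \<subseteq> M" using F e unfolding G_def by auto
  define b where "b x = v * (if x \<in> F then r x else 0) - (if x = e then u else 0) + (if x = e' then u else 0)" for x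
  have s1: "(\<Sum>x\<in>G. zsmul (if x \<in> F then r x else 0) x) = w"
    unfolding F(3) G_def using F(1) by (intro sum.mono_neutral_cong_right) auto
  have "(\<Sum>x\<in>G. zsmul (b x) x) = zsmul v (\<Sum>x\<in>G. zsmul (if x \<in> F then r x else 0) x)
       - (\<Sum>x\<in>G. zsmul (if x = e then u else 0) x) + (\<Sum>x\<in>G. zsmul (if x = e' then u else 0) x)"
    unfolding b_def by (simp add: zm.scale_left_distrib zm.scale_left_diff_distrib sum.distrib sum_subtractf
        zm.scale_sum_right del: zsmul_if0)
  also have "\<dots> = zsmul v w - zsmul u e + zsmul u e'"
    unfolding s1 by (simp only: zsmul_if0 sum.delta fG(1)) (simp add: G_def)
  also have "\<dots> = 0" using eq[symmetric] by (simp add: zm.scale_right_diff_distrib algebra_simps)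
  finally have "b e = 0" using zm.independentD[OF M fG(1) fG(2)] by (simp add: G_def)
  then have "u = v * (if e \<in> F then r e else 0)" using e(3) by (simp add: b_def)
  then show ?thesis by simp
qed



definition fin_mod :: "'a::ab_group_add set \<Rightarrow> int \<Rightarrow> bool" where
  "fin_mod Y k \<longleftrightarrow> (\<exists>R. finite R \<and> R \<subseteq> Y \<and> Y \<subseteq> {r + zsmul k z | r z. r \<in> R \<and> z \<in> Y})"

lemma fin_mod_one: "zm.subspace Y \<Longrightarrow> fin_mod Y 1"
  unfolding fin_mod_def
  by (intro exI[of _ "{0}"]) (auto intro: zm.subspace_0)

lemma fin_mod_neg: assumes "zm.subspace Y" "fin_mod Y k" shows "fin_mod Y (-k)"
proof -
  obtain R where R: "finite R" "R \<subseteq> Y" "Y \<subseteq> {r + zsmul k z | r z. r \<in> R \<and> z \<in> Y}"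
    using assms(2) unfolding fin_mod_def by blast
  have "Y \<subseteq> {r + zsmul (-k) z | r z. r \<in> R \<and> z \<in> Y}"
  proof
    fix y assume "y \<in> Y"
    then obtain r z where "r \<in> R" "z \<in> Y" "y = r + zsmul k z" using R(3) by blast
    moreover have "- z \<in> Y" using \<open>z \<in> Y\<close> assms(1) zm.subspace_neg by blast
    ultimately show "y \<in> {r + zsmul (-k) z | r z. r \<in> R \<and> z \<in> Y}"
      by (intro CollectI exI[of _ r] exI[of _ "-z"]) auto
  qed
  then show ?thesis using R unfolding fin_mod_def by blast
qed

lemma fin_mod_mult: assumes Y: "zm.subspace Y" and a: "fin_mod Y a" and b: "fin_mod Y b"
  shows "fin_mod Y (a * b)"
proof -
  obtain Ra where Ra: "finite Ra" "Ra \<subseteq> Y" "Y \<subseteq> {r + zsmul a z | r z. r \<in> Ra \<and> z \<in> Y}"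
    using a unfolding fin_mod_def by blast
  obtain Rb where Rb: "finite Rb" "Rb \<subseteq> Y" "Y \<subseteq> {r + zsmul b z | r z. r \<in> Rb \<and> z \<in> Y}"
    using b unfolding fin_mod_def by blast
  define R where "R = (\<lambda>(r, r'). r + zsmul a r') ` (Ra \<times> Rb)"
  have "finite R" unfolding R_def using Ra(1) Rb(1) by simp
  moreover have "R \<subseteq> Y" unfolding R_def using Ra(2) Rb(2) Y
    by (auto intro: zm.subspace_add zm.subspace_scale)
  moreover have "Y \<subseteq> {r + zsmul (a*b) z | r z. r \<in> R \<and> z \<in> Y}"
  proof
    fix y assume "y \<in> Y"
    then obtain r z where rz: "r \<in> Ra" "z \<in> Y" "y = r + zsmul a z" using Ra(3) by blast
    then obtain r' z' where rz': "r' \<in> Rb" "z' \<in> Y" "z = r' + zsmul b z'" using Rb(3) by blast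
    have "y = (r + zsmul a r') + zsmul (a*b) z'" using rz(3) rz'(3)
      by (simp add: zm.scale_right_distrib add.assoc)
    moreover have "r + zsmul a r' \<in> R" unfolding R_def using rz rz' by force
    ultimately show "y \<in> {r + zsmul (a*b) z | r z. r \<in> R \<and> z \<in> Y}" using rz'(2) by blast
  qed
  ultimately show ?thesis unfolding fin_mod_def by blast
qed

lemma pow_dvd_zero:
  fixes p c :: int
  assumes "p \<ge> 2" "\<forall>j. p ^ j dvd c"
  shows "c = 0"
proof (rule ccontr)
  assume c: "c \<noteq> 0"
  let ?n = "nat \<bar>c\<bar>"
  have "\<bar>p ^ ?n\<bar> \<le> \<bar>c\<bar>" using dvd_imp_le_int[OF c] assms(2) by blast
  moreover have "(2::int) ^ ?n \<le> p ^ ?n" using assms(1) by (intro power_mono) auto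
  moreover have "int ?n < 2 ^ ?n"
  proof -
    have "?n < 2 ^ ?n" by (rule less_exp)
    then have "int ?n < int (2 ^ ?n)" by (simp only: of_nat_less_iff)
    then show ?thesis by simp
  qed
  ultimately show False using assms(1) by simp
qed



lemma fin_mod_prime:
  fixes Y :: "'a::ab_group_add set"
  assumes tf: "torsion_free TYPE('a)" and rk: "finite_tf_rank TYPE('a)"
    and Y: "zm.subspace Y" and p: "prime p"
  shows "fin_mod Y p"
proof -
  have p2: "p \<ge> 2" using prime_gt_1_int[OF p] by simp
  obtain N where N: "\<And>S::'a set. z_independent S \<Longrightarrow> card S \<le> N"
    using rk unfolding finite_tf_rank_def by blast
  define pY where "pY = zsmul p ` Y"
  define pind where "pind B \<longleftrightarrow> finite B \<and> B \<subseteq> Y \<and>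
      (\<forall>c. (\<Sum>b\<in>B. zsmul (c b) b) \<in> pY \<longrightarrow> (\<forall>b\<in>B. p dvd c b))" for B
  have pind_indep: "z_independent B" if B: "pind B" for B
    unfolding z_independent_def
  proof (intro conjI allI impI ballI)
    show "finite B" using B unfolding pind_def by blast
  next
    fix c s assume c: "(\<Sum>s\<in>B. zsmul (c s) s) = 0" and s: "s \<in> B"
    have "\<forall>b\<in>B. p ^ j dvd c b" for j
    proof (induct j)
      case 0 then show ?case by simp
    next
      case (Suc j)
      define q where "q b = c b div p ^ j" for b
      have cq: "c b = p ^ j * q b" if "b \<in> B" for b
        unfolding q_def using Suc that by simp
      have "(\<Sum>b\<in>B. zsmul (c b) b) = (\<Sum>b\<in>B. zsmul (p ^ j) (zsmul (q b) b))"
        by (rule sum.cong) (simp_all add: cq)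
      then have "zsmul (p ^ j) (\<Sum>b\<in>B. zsmul (q b) b) = 0"
        using c by (simp only: zm.scale_sum_right)
      moreover have "p ^ j \<noteq> 0" using p2 by simp
      ultimately have "(\<Sum>b\<in>B. zsmul (q b) b) = 0" using tf unfolding torsion_free_def by blast
      moreover have "(0::'a) \<in> pY" unfolding pY_def using Y zm.subspace_0
        by (metis image_eqI zm.scale_zero_right)
      ultimately have "(\<Sum>b\<in>B. zsmul (q b) b) \<in> pY" by simp
      then have "\<forall>b\<in>B. p dvd q b" using B unfolding pind_def by blast
      then show ?case using cq by (simp add: mult_dvd_mono)
    qed
    then show "c s = 0" using pow_dvd_zero[OF p2] s by blast
  qed
  have "pind {}" unfolding pind_def by simp
  then obtain t where t: "\<exists>B. pind B \<and> card B = t" "\<forall>t'. (\<exists>B. pind B \<and> card B = t') \<longrightarrow> t' \<le> t"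
  proof -
    have "\<forall>y. (\<exists>B. pind B \<and> card B = y) \<longrightarrow> y \<le> N"
    proof (intro allI impI)
      fix y assume "\<exists>B. pind B \<and> card B = y"
      then obtain B where "pind B" "card B = y" by blast
      then show "y \<le> N" using N pind_indep by blast
    qed
    moreover have "\<exists>B. pind B \<and> card B = 0" using \<open>pind {}\<close> by (intro exI[of _ "{}"]) simp
    ultimately show ?thesis using that Nat.ex_has_greatest_nat[of "\<lambda>t. \<exists>B. pind B \<and> card B = t" 0 N]
      by blast
  qed
  then obtain B where B: "pind B" "card B = t" by blast
  have fB: "finite B" "B \<subseteq> Y" using B unfolding pind_def by auto
  define R where "R = (\<lambda>a. \<Sum>b\<in>B. zsmul (a b) b) ` (PiE B (\<lambda>_. {0..<p}))"
  have "finite R" unfolding R_def using fB(1) by (simp add: finite_PiE)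
  moreover have "R \<subseteq> Y" unfolding R_def using fB(2) Y
    by (auto intro!: zm.subspace_sum zm.subspace_scale)
  moreover have "Y \<subseteq> {r + zsmul p z | r z. r \<in> R \<and> z \<in> Y}"
  proof
    fix y assume yY: "y \<in> Y"
    have inR: "(\<Sum>b\<in>B. zsmul (a b) b) \<in> R" if "\<forall>b\<in>B. a b \<in> {0..<p}" for a
    proof -
      have r1: "restrict a B \<in> PiE B (\<lambda>_. {0..<p})" using that by (simp add: PiE_iff)
      have r2: "(\<Sum>b\<in>B. zsmul (a b) b) = (\<Sum>b\<in>B. zsmul (restrict a B b) b)"
        by (rule sum.cong) simp_all
      show ?thesis unfolding R_def
        by (rule image_eqI[where x="restrict a B"]) (simp only: r2, rule r1)
    qed
    show "y \<in> {r + zsmul p z | r z. r \<in> R \<and> z \<in> Y}"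
    proof (cases "y \<in> B")
      case True
      define a where "a b = (if b = y then 1 else 0::int)" for b
      have "(\<Sum>b\<in>B. zsmul (a b) b) = y" unfolding a_def using fB(1) True
        by (simp add: zsmul_if0)
      moreover have "(\<Sum>b\<in>B. zsmul (a b) b) \<in> R" using p2 by (intro inR) (auto simp: a_def)
      ultimately have "y = (\<Sum>b\<in>B. zsmul (a b) b) + zsmul p 0" "(\<Sum>b\<in>B. zsmul (a b) b) \<in> R"
        by simp_all
      then show ?thesis using zm.subspace_0[OF Y] by blast
    next
      case False
      have "\<not> pind (insert y B)"
      proof
        assume "pind (insert y B)"
        then have "card (insert y B) \<le> t" using t(2) by blast
        then show False using B(2) fB(1) False by simp
      qed
      moreover have "finite (insert y B)" "insert y B \<subseteq> Y" using fB yY by auto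
      ultimately have "\<not> (\<forall>c. (\<Sum>x\<in>insert y B. zsmul (c x) x) \<in> pY \<longrightarrow> (\<forall>x\<in>insert y B. p dvd c x))"
        unfolding pind_def by blast
      then obtain c where c: "(\<Sum>x\<in>insert y B. zsmul (c x) x) \<in> pY" "\<exists>x\<in>insert y B. \<not> p dvd c x"
        by blast
      obtain z where z: "z \<in> Y" "(\<Sum>x\<in>insert y B. zsmul (c x) x) = zsmul p z"
        using c(1) unfolding pY_def by blast
      have sum_ins: "zsmul (c y) y + (\<Sum>x\<in>B. zsmul (c x) x) = zsmul p z"
        using z(2) fB(1) False by simp
      have ncy: "\<not> p dvd c y"
      proof
        assume "p dvd c y"
        then obtain q where q: "c y = p * q" by blast
        have "(\<Sum>x\<in>B. zsmul (c x) x) = zsmul p (z - zsmul q y)"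
          using sum_ins q by (simp add: zm.scale_right_diff_distrib algebra_simps)
        moreover have "z - zsmul q y \<in> Y" using z(1) yY Y by (intro zm.subspace_diff zm.subspace_scale)
        ultimately have "(\<Sum>x\<in>B. zsmul (c x) x) \<in> pY" unfolding pY_def by blast
        then have "\<forall>b\<in>B. p dvd c b" using B(1) unfolding pind_def by blast
        then show False using c(2) \<open>p dvd c y\<close> by auto
      qed
      have "coprime p (c y)" using prime_imp_coprime[OF p ncy] .
      then have g1: "gcd (c y) p = 1" by (simp add: coprime_commute)
      obtain u v where "u * c y + v * p = gcd (c y) p" using bezout_int by blast
      then have uv: "u * c y + v * p = 1" using g1 by simp
      define a where "a b = (- (u * c b)) mod p" for b
      define q where "q b = (- (u * c b)) div p" for b
      have aq: "- (u * c b) = a b + p * q b" for b unfolding a_def q_def by simp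
      have y1: "y = zsmul u (zsmul (c y) y) + zsmul p (zsmul v y)"
      proof -
        have "y = zsmul (u * c y + v * p) y" using uv by simp
        then show ?thesis by (simp add: zm.scale_left_distrib ac_simps)
      qed
      have "zsmul u (zsmul (c y) y) = zsmul p (zsmul u z) + (\<Sum>x\<in>B. zsmul (- (u * c x)) x)"
      proof -
        have "zsmul (c y) y = zsmul p z - (\<Sum>x\<in>B. zsmul (c x) x)" using sum_ins by (simp add: algebra_simps)
        then show ?thesis
          by (simp add: zm.scale_right_diff_distrib zm.scale_sum_right sum_negf ac_simps)
      qed
      also have "(\<Sum>x\<in>B. zsmul (- (u * c x)) x) = (\<Sum>x\<in>B. zsmul (a x) x) + zsmul p (\<Sum>x\<in>B. zsmul (q x) x)"
        by (simp add: aq zm.scale_left_distrib sum.distrib zm.scale_sum_right ac_simps)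
      finally have "y = (\<Sum>x\<in>B. zsmul (a x) x) + zsmul p (zsmul u z + zsmul v y + (\<Sum>x\<in>B. zsmul (q x) x))"
        using y1 by (simp add: zm.scale_right_distrib algebra_simps)
      moreover have "(\<Sum>x\<in>B. zsmul (a x) x) \<in> R"
        using p2 by (intro inR) (auto simp: a_def)
      moreover have "zsmul u z + zsmul v y + (\<Sum>x\<in>B. zsmul (q x) x) \<in> Y"
        using Y z(1) yY fB(2)
        by (intro zm.subspace_add zm.subspace_scale zm.subspace_sum) auto
      ultimately show ?thesis by blast
    qed
  qed
  ultimately show ?thesis unfolding fin_mod_def by blast
qed

lemma fin_mod_all:
  fixes Y :: "'a::ab_group_add set"
  assumes tf: "torsion_free TYPE('a)" and rk: "finite_tf_rank TYPE('a)"
    and Y: "zm.subspace Y" and k: "k \<noteq> 0"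
  shows "fin_mod Y k"
  using k
proof (induct "nat \<bar>k\<bar>" arbitrary: k rule: less_induct)
  case less
  show ?case
  proof (cases "\<bar>k\<bar> = 1")
    case True
    then have "k = 1 \<or> k = -1" by auto
    then show ?thesis using fin_mod_one[OF Y] fin_mod_neg[OF Y] by fastforce
  next
    case False
    then obtain p where p: "prime p" "p dvd k" using prime_factor_int by blast
    then obtain k' where k': "k = p * k'" by blast
    have p2: "p \<ge> 2" using prime_gt_1_int[OF p(1)] by simp
    have "k' \<noteq> 0" using less(2) k' by auto
    moreover have "nat \<bar>k'\<bar> < nat \<bar>k\<bar>"
    proof -
      have "\<bar>k\<bar> = p * \<bar>k'\<bar>" using k' p2 by (simp add: abs_mult)
      moreover have "\<bar>k'\<bar> > 0" using \<open>k' \<noteq> 0\<close> by simp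
      ultimately show ?thesis using p2 by simp
    qed
    ultimately have "fin_mod Y k'" using less(1) by blast
    then show ?thesis using fin_mod_mult[OF Y fin_mod_prime[OF tf rk Y p(1)]] k' by simp
  qed
qed



lemma coprime_dvd_unit:
  fixes m n :: int
  assumes "coprime m n" "n dvd m" shows "\<bar>n\<bar> = 1"
proof -
  have "is_unit n" using coprime_common_divisor[OF assms(1) assms(2)] by simp
  then show ?thesis by simp
qed

lemma endo_image_subspace:
  assumes endo: "endomorphism \<phi>" and X: "zm.subspace X"
  shows "zm.subspace (\<phi> ` X)"
  unfolding zm.subspace_def
proof (intro conjI ballI allI)
  show "0 \<in> \<phi> ` X" using zm.subspace_0[OF X] endo_0[OF endo] by force
next
  fix x y assume "x \<in> \<phi> ` X" "y \<in> \<phi> ` X"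
  then obtain a b where "a \<in> X" "b \<in> X" "x = \<phi> a" "y = \<phi> b" by auto
  then have "x + y = \<phi> (a + b)" "a + b \<in> X" using zm.subspace_add[OF X] endo_add[OF endo] by auto
  then show "x + y \<in> \<phi> ` X" by blast
next
  fix c x assume "x \<in> \<phi> ` X"
  then obtain a where "a \<in> X" "x = \<phi> a" by auto
  then have "zsmul c x = \<phi> (zsmul c a)" "zsmul c a \<in> X" using zm.subspace_scale[OF X] endo_zsmul[OF endo] by auto
  then show "zsmul c x \<in> \<phi> ` X" by blast
qed

lemma setsum_subspace:
  assumes endo: "endomorphism \<phi>" and X: "zm.subspace X"
  shows "zm.subspace (setsum (\<phi> ` X) X)"
proof -
  have "setsum (\<phi> ` X) X = {x + y | x y. x \<in> \<phi> ` X \<and> y \<in> X}" by (simp add: setsum_def)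
  also have "\<dots> = zm.span (\<phi> ` X \<union> X)"
    using zm.span_Un[of "\<phi> ` X" X] zm.span_eq_iff[THEN iffD2, OF endo_image_subspace[OF endo X]]
      zm.span_eq_iff[THEN iffD2, OF X] by simp
  finally show ?thesis by simp
qed

lemma R_infinite:
  fixes \<phi> :: "'a::ab_group_add \<Rightarrow> 'a"
  assumes tf: "torsion_free TYPE('a)" and endo: "endomorphism \<phi>"
    and mb: "mult_by \<phi> m n" and cop: "coprime m n" and n1: "\<bar>n\<bar> \<noteq> 1"
    and nr: "\<not> finite_tf_rank TYPE('a)"
  shows "\<not> inertial \<phi>"
proof
  assume I: "inertial \<phi>"
  obtain M :: "'a set" where M: "infinite M" "zm.independent M" using infinite_indep_exists[OF tf nr] by blast
  define X where "X = zm.span M"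
  have sX: "zm.subspace X" unfolding X_def by simp
  then have "finite_quot (setsum (\<phi> ` X) X) X" using I subgrp_subspace unfolding inertial_def by blast
  then have fin: "finite ((\<lambda>y. (\<lambda>x. y + x) ` X) ` setsum (\<phi> ` X) X)" unfolding finite_quot_def .
  define g where "g e = (\<lambda>x. \<phi> e + x) ` X" for e
  have gin: "g ` M \<subseteq> (\<lambda>y. (\<lambda>x. y + x) ` X) ` setsum (\<phi> ` X) X"
  proof
    fix c assume "c \<in> g ` M"
    then obtain e where e: "e \<in> M" "c = g e" by auto
    have "e \<in> X" unfolding X_def using e(1) by (simp add: zm.span_base)
    then have "\<phi> e + 0 \<in> setsum (\<phi> ` X) X" unfolding setsum_def using zm.subspace_0[OF sX] by blast
    then show "c \<in> (\<lambda>y. (\<lambda>x. y + x) ` X) ` setsum (\<phi> ` X) X" unfolding e(2) g_def by force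
  qed
  have "inj_on g M"
  proof (rule inj_onI, rule ccontr)
    fix e e' assume ee: "e \<in> M" "e' \<in> M" "g e = g e'" "e \<noteq> e'"
    then have w: "\<phi> e - \<phi> e' \<in> X" unfolding g_def using coset_eq_imp zm.subspace_0[OF sX] by blast
    have "zsmul m (e - e') = zsmul n (\<phi> e - \<phi> e')"
      using mb unfolding mult_by_def by (simp add: zm.scale_right_diff_distrib)
    then have "n dvd m" using indep_no_divide[OF M(2) ee(1,2,4)] w unfolding X_def by blast
    then show False using coprime_dvd_unit[OF cop] n1 by blast
  qed
  then have "infinite (g ` M)" using M(1) finite_imageD by blast
  then show False using fin gin finite_subset by blast
qed

lemma L_infinite:
  fixes \<phi> :: "'a::ab_group_add \<Rightarrow> 'a"
  assumes tf: "torsion_free TYPE('a)" and endo: "endomorphism \<phi>"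
    and mb: "mult_by \<phi> m n" and cop: "coprime m n" and m1: "\<bar>m\<bar> \<noteq> 1"
    and nr: "\<not> finite_tf_rank TYPE('a)"
  shows "\<not> left_inertial \<phi>"
proof
  assume I: "left_inertial \<phi>"
  obtain M :: "'a set" where M: "infinite M" "zm.independent M" using infinite_indep_exists[OF tf nr] by blast
  define X where "X = zm.span M"
  have sX: "zm.subspace X" unfolding X_def by simp
  define H where "H = X \<inter> \<phi> ` X"
  have H0: "0 \<in> H" unfolding H_def using zm.subspace_0[OF sX] endo_0[OF endo] by force
  have "finite_quot X H" using I sX subgrp_subspace unfolding left_inertial_def H_def by blast
  then have fin: "finite ((\<lambda>y. (\<lambda>x. y + x) ` H) ` X)" unfolding finite_quot_def .
  define g where "g e = (\<lambda>x. e + x) ` H" for e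
  have gin: "g ` M \<subseteq> (\<lambda>y. (\<lambda>x. y + x) ` H) ` X"
    unfolding g_def X_def using zm.span_base by blast
  have "inj_on g M"
  proof (rule inj_onI, rule ccontr)
    fix e e' assume ee: "e \<in> M" "e' \<in> M" "g e = g e'" "e \<noteq> e'"
    then have "e - e' \<in> H" unfolding g_def using coset_eq_imp H0 by blast
    then obtain w where w: "w \<in> X" "e - e' = \<phi> w" unfolding H_def by auto
    have "zsmul n (e - e') = zsmul m w"
      using mb w(2) unfolding mult_by_def by simp
    then have "m dvd n" using indep_no_divide[OF M(2) ee(1,2,4)] w(1) unfolding X_def by blast
    then show False using coprime_dvd_unit[of n m] cop m1 by (simp add: coprime_commute)
  qed
  then have "infinite (g ` M)" using M(1) finite_imageD by blast
  then show False using fin gin finite_subset by blast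
qed

lemma R_finite:
  fixes \<phi> :: "'a::ab_group_add \<Rightarrow> 'a"
  assumes tf: "torsion_free TYPE('a)" and endo: "endomorphism \<phi>"
    and mb: "mult_by \<phi> m n" and rk: "\<bar>n\<bar> \<noteq> 1 \<longrightarrow> finite_tf_rank TYPE('a)"
  shows "inertial \<phi>"
  unfolding inertial_def finite_quot_def
proof (intro allI impI)
  fix X :: "'a set" assume "subgrp X"
  then have sX: "zm.subspace X" by (simp add: subgrp_subspace)
  define Y where "Y = setsum (\<phi> ` X) X"
  have sY: "zm.subspace Y" unfolding Y_def using setsum_subspace[OF endo sX] .
  have nphi: "zsmul n (\<phi> x) = zsmul m x" for x using mb unfolding mult_by_def by blast
  show "finite ((\<lambda>y. (\<lambda>x. y + x) ` X) ` setsum (\<phi> ` X) X)"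
  proof (cases "\<bar>n\<bar> = 1")
    case True
    then have nn: "n * n = 1" using abs_mult_self_eq[of n] by simp
    have phiX: "\<phi> x \<in> X" if "x \<in> X" for x
    proof -
      have "\<phi> x = zsmul n (zsmul n (\<phi> x))" using nn by simp
      also have "\<dots> = zsmul n (zsmul m x)" using nphi by (simp only:)
      finally show ?thesis using that sX by (simp add: zm.subspace_scale)
    qed
    have "(\<lambda>y. (\<lambda>x. y + x) ` X) ` setsum (\<phi> ` X) X \<subseteq> {X}"
    proof
      fix c assume "c \<in> (\<lambda>y. (\<lambda>x. y + x) ` X) ` setsum (\<phi> ` X) X"
      then obtain y where y: "y \<in> setsum (\<phi> ` X) X" "c = (\<lambda>x. y + x) ` X" by blast
      then obtain a b where ab: "a \<in> X" "b \<in> X" "y = \<phi> a + b"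
        unfolding setsum_def by blast
      have "y \<in> X" using phiX[OF ab(1)] ab(2,3) sX zm.subspace_add by blast
      then have "c = X" using coset_self[OF sX] y(2) by blast
      then show "c \<in> {X}" by blast
    qed
    then show ?thesis using finite_subset by blast
  next
    case False
    then have rk': "finite_tf_rank TYPE('a)" using rk by blast
    have n0: "n \<noteq> 0" using mb unfolding mult_by_def by blast
    have "fin_mod Y n" by (rule fin_mod_all[OF tf rk' sY n0])
    then obtain R where R: "finite R" "R \<subseteq> Y" "Y \<subseteq> {r + zsmul n z | r z. r \<in> R \<and> z \<in> Y}"
      unfolding fin_mod_def by blast
    have "(\<lambda>y. (\<lambda>x. y + x) ` X) ` Y \<subseteq> (\<lambda>y. (\<lambda>x. y + x) ` X) ` R"
    proof
      fix c assume "c \<in> (\<lambda>y. (\<lambda>x. y + x) ` X) ` Y"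
      then obtain y where y: "y \<in> Y" "c = (\<lambda>x. y + x) ` X" by auto
      then obtain r z where rz: "r \<in> R" "z \<in> Y" "y = r + zsmul n z" using R(3) by blast
      then obtain a b where ab: "a \<in> X" "b \<in> X" "z = \<phi> a + b" unfolding Y_def setsum_def by blast
      have "zsmul n z = zsmul n (\<phi> a) + zsmul n b" using ab(3) by (simp only: zm.scale_right_distrib)
      then have "zsmul n z = zsmul m a + zsmul n b" using nphi by simp
      moreover have "zsmul m a + zsmul n b \<in> X" using ab(1,2) sX zm.subspace_add zm.subspace_scale by blast
      ultimately have "zsmul n z \<in> X" by simp
      have "c = (\<lambda>x. (r + zsmul n z) + x) ` X" using y(2) rz(3) by blast
      also have "\<dots> = (\<lambda>x. r + x) ` X" by (rule coset_shift[OF sX \<open>zsmul n z \<in> X\<close>])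
      finally show "c \<in> (\<lambda>y. (\<lambda>x. y + x) ` X) ` R" using rz(1) by blast
    qed
    moreover have "finite ((\<lambda>y. (\<lambda>x. y + x) ` X) ` R)" using R(1) by simp
    ultimately show ?thesis unfolding Y_def by (rule finite_subset)
  qed
qed

lemma L_finite:
  fixes \<phi> :: "'a::ab_group_add \<Rightarrow> 'a"
  assumes tf: "torsion_free TYPE('a)" and endo: "endomorphism \<phi>"
    and mb: "mult_by \<phi> m n" and m0: "m \<noteq> 0" and rk: "\<bar>m\<bar> \<noteq> 1 \<longrightarrow> finite_tf_rank TYPE('a)"
  shows "left_inertial \<phi>"
  unfolding left_inertial_def finite_quot_def
proof (intro allI impI)
  fix X :: "'a set" assume "subgrp X"
  then have sX: "zm.subspace X" by (simp add: subgrp_subspace)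
  define H where "H = X \<inter> \<phi> ` X"
  have sH: "zm.subspace H" unfolding H_def using zm.subspace_inter sX endo_image_subspace[OF endo sX] by blast
  have nphi: "zsmul n (\<phi> x) = zsmul m x" for x using mb unfolding mult_by_def by blast
  show "finite ((\<lambda>y. (\<lambda>x. y + x) ` (X \<inter> \<phi> ` X)) ` X)"
  proof (cases "\<bar>m\<bar> = 1")
    case True
    then have mm: "m * m = 1" using abs_mult_self_eq[of m] by simp
    have "X \<subseteq> \<phi> ` X"
    proof
      fix x assume x: "x \<in> X"
      have "\<phi> (zsmul m (zsmul n x)) = zsmul m (zsmul n (\<phi> x))" by (simp add: endo_zsmul[OF endo])
      also have "\<dots> = zsmul (m * m) x" using nphi by simp
      also have "\<dots> = x" using mm by simp
      finally have "x = \<phi> (zsmul m (zsmul n x))" by simp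
      moreover have "zsmul m (zsmul n x) \<in> X" using x sX by (simp add: zm.subspace_scale)
      ultimately show "x \<in> \<phi> ` X" by blast
    qed
    then have HX: "H = X" unfolding H_def by blast
    have "(\<lambda>y. (\<lambda>x. y + x) ` H) ` X \<subseteq> {H}"
    proof
      fix c assume "c \<in> (\<lambda>y. (\<lambda>x. y + x) ` H) ` X"
      then obtain y where "y \<in> H" "c = (\<lambda>x. y + x) ` H" using HX by auto
      then show "c \<in> {H}" using coset_self[OF sH] by blast
    qed
    then show ?thesis using finite_subset unfolding H_def by blast
  next
    case False
    then have rk': "finite_tf_rank TYPE('a)" using rk by blast
    have "fin_mod X m" by (rule fin_mod_all[OF tf rk' sX m0])
    then obtain R where R: "finite R" "R \<subseteq> X" "X \<subseteq> {r + zsmul m z | r z. r \<in> R \<and> z \<in> X}"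
      unfolding fin_mod_def by blast
    have "(\<lambda>y. (\<lambda>x. y + x) ` H) ` X \<subseteq> (\<lambda>y. (\<lambda>x. y + x) ` H) ` R"
    proof
      fix c assume "c \<in> (\<lambda>y. (\<lambda>x. y + x) ` H) ` X"
      then obtain y where y: "y \<in> X" "c = (\<lambda>x. y + x) ` H" by auto
      then obtain r z where rz: "r \<in> R" "z \<in> X" "y = r + zsmul m z" using R(3) by blast
      have "zsmul m z = \<phi> (zsmul n z)" using nphi by (simp add: endo_zsmul[OF endo])
      moreover have "zsmul n z \<in> X" "zsmul m z \<in> X" using rz(2) sX by (simp_all add: zm.subspace_scale)
      ultimately have "zsmul m z \<in> H" unfolding H_def by auto
      have "c = (\<lambda>x. (r + zsmul m z) + x) ` H" using y(2) rz(3) by blast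
      also have "\<dots> = (\<lambda>x. r + x) ` H" by (rule coset_shift[OF sH \<open>zsmul m z \<in> H\<close>])
      finally show "c \<in> (\<lambda>y. (\<lambda>x. y + x) ` H) ` R" using rz(1) by blast
    qed
    moreover have "finite ((\<lambda>y. (\<lambda>x. y + x) ` H) ` R)" using R(1) by simp
    ultimately show ?thesis unfolding H_def by (rule finite_subset)
  qed
qed

theorem proposition2p2:
  fixes \<phi> :: "'a::ab_group_add \<Rightarrow> 'a"
  assumes "torsion_free TYPE('a)"
    and "endomorphism \<phi>"
  shows "(inertial \<phi> \<longleftrightarrow>
           (\<exists>m n::int. coprime m n \<and> mult_by \<phi> m n \<and>
              (\<bar>n\<bar> \<noteq> 1 \<longrightarrow> finite_tf_rank TYPE('a))))
       \<and> (left_inertial \<phi> \<longleftrightarrow>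
           (\<exists>m n::int. coprime m n \<and> m \<noteq> 0 \<and> mult_by \<phi> m n \<and>
              (\<bar>m\<bar> \<noteq> 1 \<longrightarrow> finite_tf_rank TYPE('a))))"
proof (intro conjI iffI)
  note tf = assms(1) and endo = assms(2)
  assume I: "inertial \<phi>"
  obtain m n where mn: "coprime m n" "mult_by \<phi> m n"
    using uniform_ratio[OF tf endo inertial_pointwise[OF endo I]] by blast
  have "\<bar>n\<bar> \<noteq> 1 \<longrightarrow> finite_tf_rank TYPE('a)" using R_infinite[OF tf endo mn(2) mn(1)] I by blast
  then show "\<exists>m n::int. coprime m n \<and> mult_by \<phi> m n \<and> (\<bar>n\<bar> \<noteq> 1 \<longrightarrow> finite_tf_rank TYPE('a))"
    using mn by blast
next
  note tf = assms(1) and endo = assms(2)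
  assume "\<exists>m n::int. coprime m n \<and> mult_by \<phi> m n \<and> (\<bar>n\<bar> \<noteq> 1 \<longrightarrow> finite_tf_rank TYPE('a))"
  then show "inertial \<phi>" using R_finite[OF tf endo] by blast
next
  note tf = assms(1) and endo = assms(2)
  assume I: "left_inertial \<phi>"
  show "\<exists>m n::int. coprime m n \<and> m \<noteq> 0 \<and> mult_by \<phi> m n \<and> (\<bar>m\<bar> \<noteq> 1 \<longrightarrow> finite_tf_rank TYPE('a))"
  proof (cases "\<exists>x0::'a. x0 \<noteq> 0")
    case False
    then have "\<phi> x = x" for x by (metis (full_types))
    then have "mult_by \<phi> 1 1" unfolding mult_by_def by simp
    then show ?thesis by (intro exI[of _ 1]) auto
  next
    case True
    then obtain x0 :: 'a where x0: "x0 \<noteq> 0" by blast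
    have H: "\<exists>k l. k \<noteq> 0 \<and> zsmul k (\<phi> z) = zsmul l z" for z
    proof (cases "z = 0")
      case True then show ?thesis using endo_0[OF endo] by (intro exI[of _ 1]) auto
    next
      case False
      obtain k l where kl: "k \<noteq> 0" "zsmul k z = zsmul l (\<phi> z)" using left_inertial_pointwise[OF endo I] by blast
      have "l \<noteq> 0"
      proof
        assume "l = 0"
        then have "zsmul k z = 0" using kl by simp
        then show False using tf kl(1) False unfolding torsion_free_def by blast
      qed
      then show ?thesis using kl by (intro exI[of _ l] exI[of _ k]) simp
    qed
    obtain m n where mn: "coprime m n" "mult_by \<phi> m n"
      using uniform_ratio[OF tf endo H] by blast
    have m0: "m \<noteq> 0"
    proof
      assume "m = 0"
      have "\<phi> x = 0" for x
      proof -
        have "zsmul n (\<phi> x) = 0" "n \<noteq> 0" using mn(2) \<open>m = 0\<close> unfolding mult_by_def by auto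
        then show ?thesis using tf unfolding torsion_free_def by blast
      qed
      obtain k l where kl: "k \<noteq> 0" "zsmul k x0 = zsmul l (\<phi> x0)" using left_inertial_pointwise[OF endo I] by blast
      then have "zsmul k x0 = 0" using \<open>\<And>x. \<phi> x = 0\<close> by simp
      then show False using tf kl(1) x0 unfolding torsion_free_def by blast
    qed
    have "\<bar>m\<bar> \<noteq> 1 \<longrightarrow> finite_tf_rank TYPE('a)" using L_infinite[OF tf endo mn(2) mn(1)] I by blast
    then show ?thesis using mn m0 by blast
  qed
next
  note tf = assms(1) and endo = assms(2)
  assume "\<exists>m n::int. coprime m n \<and> m \<noteq> 0 \<and> mult_by \<phi> m n \<and> (\<bar>m\<bar> \<noteq> 1 \<longrightarrow> finite_tf_rank TYPE('a))"
  then show "left_inertial \<phi>" using L_finite[OF tf endo] by blast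
qed

end
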